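(* Let $r(t)\in\mathbb{Z}[t]$ with $r(0)\neq0$, and let $X$ be the set of roots of $r(t)$ in $\overline{\mathbb{Q}}^\times$. The following are equivalent: (i) $X$ is not an arithmetically-free subset of $(\overline{\mathbb{Q}}^\times,\cdot)$; (ii) there exist $u\in\mathbb{N}$ and $s(t)\in\mathbb{Z}[t]\setminus\mathbb{Z}$ such that both the cyclotomic polynomial $\Phi_u(t)$ and $s(t^u)$ divide $r(t)$ in $\mathbb{Z}[t]$.
   Context: $\mathbb{N}=\{1,2,\dots\}$. A finite subset $X$ of an abelian group $(A,\cdot)$ is arithmetically-free if $X$ contains no progression $\lambda,\lambda\mu,\lambda\mu^2,\dots,\lambda\mu^{|X|}$ with $\lambda,\mu\in X$. $\Phi_u(t)$ denotes the $u$-th cyclotomic polynomial. *)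

theory Defs
  imports Complex_Main "HOL-Computational_Algebra.Polynomial"
begin

definition arith_free :: "'a::comm_monoid_mult set \<Rightarrow> bool" where
  "arith_free X \<longleftrightarrow> finite X \<and>
     \<not> (\<exists>l\<in>X. \<exists>m\<in>X. \<forall>k\<le>card X. l * m ^ k \<in> X)"

definition cyclotomic_complex :: "nat \<Rightarrow> complex poly" where
  "cyclotomic_complex u =
     (\<Prod>k\<in>{k\<in>{1..u}. coprime k u}. [: - cis (2 * pi * real k / real u), 1 :])"

text \<open>The u-th cyclotomic polynomial as an element of Z[t] (its coefficients are integers).\<close>
definition cyclotomic :: "nat \<Rightarrow> int poly" where
  "cyclotomic u = (THE p. map_poly of_int p = cyclotomic_complex u)"

end

theory Submission
  imports Defs "HOL-Computational_Algebra.Computational_Algebra"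
begin

abbreviation cp :: "int poly \<Rightarrow> complex poly" where "cp \<equiv> map_poly of_int"

lemma cp_add: "cp (p + q) = cp p + cp q"
  by (rule poly_eqI) (simp add: coeff_map_poly)
lemma cp_diff: "cp (p - q) = cp p - cp q"
  by (rule poly_eqI) (simp add: coeff_map_poly)
lemma cp_uminus: "cp (- p) = - cp p"
  by (rule poly_eqI) (simp add: coeff_map_poly)
lemma cp_mult: "cp (p * q) = cp p * cp q"
  by (rule poly_eqI) (simp add: coeff_map_poly coeff_mult)
lemma cp_smult: "cp (smult c p) = smult (of_int c) (cp p)"
  by (rule poly_eqI) (simp add: coeff_map_poly)
lemma cp_monom: "cp (monom c n) = monom (of_int c) n"
  by (simp add: map_poly_monom)
lemma cp_const: "cp [:c:] = [:of_int c:]"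
  by (simp add: map_poly_pCons)
lemma cp_one: "cp 1 = 1" by simp
lemma cp_power: "cp (p ^ n) = cp p ^ n"
  by (induction n) (simp_all add: cp_mult)
lemma cp_sum: "cp (\<Sum>i\<in>A. f i) = (\<Sum>i\<in>A. cp (f i))"
  by (induction A rule: infinite_finite_induct) (simp_all add: cp_add)
lemma cp_pcompose: "cp (pcompose p q) = pcompose (cp p) (cp q)"
proof (induction p)
  case (pCons a p)
  have "cp (pCons a p) = pCons (of_int a) (cp p)" by (simp add: map_poly_pCons)
  then show ?case using pCons by (simp add: pcompose_pCons cp_add cp_mult cp_const)
qed simp
lemma cp_dvd: "p dvd q \<Longrightarrow> cp p dvd cp q"
  by (auto simp: cp_mult elim!: dvdE)
lemma cp_inj: "cp p = cp q \<Longrightarrow> p = q"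
  by (metis coeff_map_poly of_int_0 of_int_eq_iff poly_eqI)
lemma cp_eq_0: "cp p = 0 \<longleftrightarrow> p = 0"
  by (metis cp_inj map_poly_0)
lemma degree_cp: "degree (cp p) = degree p"
  by (simp add: degree_map_poly)
lemma lead_coeff_cp: "lead_coeff (cp p) = of_int (lead_coeff p)"
  by (simp add: degree_cp coeff_map_poly)

definition cgr :: "int \<Rightarrow> 'a::comm_ring_1 \<Rightarrow> 'a \<Rightarrow> bool" where
  "cgr p a b \<longleftrightarrow> (\<exists>z. a = b + of_int p * z)"

lemma cgr_refl: "cgr p a a" unfolding cgr_def by (rule exI[of _ 0]) simp
lemma cgr_sym: "cgr p a b \<Longrightarrow> cgr p b a"
proof -
  assume "cgr p a b"
  then obtain z where "a = b + of_int p * z" unfolding cgr_def by blast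
  then show ?thesis unfolding cgr_def by (intro exI[of _ "- z"]) simp
qed
lemma cgr_trans: "cgr p a b \<Longrightarrow> cgr p b c \<Longrightarrow> cgr p a c"
proof -
  assume "cgr p a b" "cgr p b c"
  then obtain z w where "a = b + of_int p * z" "b = c + of_int p * w" unfolding cgr_def by blast
  then show ?thesis unfolding cgr_def by (intro exI[of _ "z + w"]) (simp add: algebra_simps)
qed
lemma cgr_add: "cgr p a b \<Longrightarrow> cgr p c d \<Longrightarrow> cgr p (a + c) (b + d)"
proof -
  assume "cgr p a b" "cgr p c d"
  then obtain z w where "a = b + of_int p * z" "c = d + of_int p * w" unfolding cgr_def by blast
  then show ?thesis unfolding cgr_def
    by (intro exI[of _ "z + w"]) (simp add: algebra_simps)
qed
lemma cgr_mult: "cgr p a b \<Longrightarrow> cgr p c d \<Longrightarrow> cgr p (a * c) (b * d)"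
proof -
  assume "cgr p a b" "cgr p c d"
  then obtain z w where "a = b + of_int p * z" "c = d + of_int p * w" unfolding cgr_def by blast
  then show ?thesis unfolding cgr_def
    by (intro exI[of _ "z * d + b * w + of_int p * z * w"]) (simp add: algebra_simps)
qed
lemma cgr_power: "cgr p a b \<Longrightarrow> cgr p (a ^ n) (b ^ n)"
  by (induction n) (auto intro: cgr_mult cgr_refl)

lemma frob_add:
  fixes a b :: "'a::comm_ring_1"
  assumes "prime (p::nat)"
  shows "cgr (int p) ((a + b) ^ p) (a ^ p + b ^ p)"
proof -
  have p0: "p > 0" using assms prime_gt_0_nat by blast
  define F where "F = (\<lambda>k. of_nat (p choose k) * a ^ k * b ^ (p - k))"
  define S where "S = (\<Sum>k\<in>{1..<p}. of_nat ((p choose k) div p) * a ^ k * b ^ (p - k))"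
  have "(a + b) ^ p = (\<Sum>k\<le>p. F k)" unfolding F_def by (rule binomial_ring)
  also have "{..p} = insert 0 (insert p {1..<p})" using p0 by auto
  also have "(\<Sum>k\<in>insert 0 (insert p {1..<p}). F k) = F 0 + (F p + (\<Sum>k\<in>{1..<p}. F k))"
  proof -
    have "sum F (insert 0 (insert p {1..<p})) = F 0 + sum F (insert p {1..<p})"
      using p0 by (intro sum.insert) auto
    also have "sum F (insert p {1..<p}) = F p + sum F {1..<p}" by (intro sum.insert) auto
    finally show ?thesis .
  qed
  also have "F 0 = b ^ p" unfolding F_def by simp
  also have "F p = a ^ p" unfolding F_def by simp
  also have "(\<Sum>k\<in>{1..<p}. F k) = of_nat p * S"
  proof -
    have "F k = of_nat p * (of_nat ((p choose k) div p) * a ^ k * b ^ (p - k))" if "k \<in> {1..<p}" for k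
    proof -
      have "(p choose k) = p * ((p choose k) div p)"
        using dvd_choose_prime assms that by auto
      then have "(of_nat (p choose k) :: 'a) = of_nat p * of_nat ((p choose k) div p)"
        by (metis of_nat_mult)
      then show ?thesis unfolding F_def by (simp only: mult.assoc)
    qed
    then show ?thesis unfolding S_def by (simp only: sum_distrib_left cong: sum.cong)
  qed
  finally have "(a + b) ^ p = b ^ p + (a ^ p + of_nat p * S)" .
  then have "(a + b) ^ p = (a ^ p + b ^ p) + of_int (int p) * S" by (simp add: add_ac)
  then show ?thesis unfolding cgr_def by blast
qed

lemma fermat_int:
  assumes "prime (p::nat)"
  shows "cgr (int p) ((a::int) ^ p) a"
proof -
  have p0: "p > 0" using assms prime_gt_0_nat by blast
  have m1: "cgr (int p) ((-1::int) ^ p) (-1)"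
  proof (cases "p = 2")
    case True then show ?thesis unfolding cgr_def by (intro exI[of _ 1]) simp
  next
    case False
    have "p \<ge> 2" using assms prime_ge_2_nat by blast
    then have "p > 2" using False by simp
    then have "odd p" using assms prime_odd_nat by blast
    then have "(-1::int) ^ p = -1" by simp
    then show ?thesis by (simp add: cgr_refl)
  qed
  have one: "cgr (int p) ((1::int) ^ p) 1" by (simp add: cgr_refl)
  show ?thesis
  proof (induction a rule: int_induct[where k = 0])
    case base then show ?case using p0 by (simp add: cgr_refl power_0_left)
  next
    case (step1 i)
    have A: "cgr (int p) ((i + 1) ^ p) (i ^ p + 1 ^ p)" by (rule frob_add[OF assms])
    have B: "cgr (int p) (i ^ p + 1 ^ p) (i + 1)" by (rule cgr_add[OF step1(2) one])
    show ?case by (rule cgr_trans[OF A B])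
  next
    case (step2 i)
    have A: "cgr (int p) ((i + (-1)) ^ p) (i ^ p + (-1) ^ p)" by (rule frob_add[OF assms])
    have B: "cgr (int p) (i ^ p + (-1) ^ p) (i + (-1))" by (rule cgr_add[OF step2(2) m1])
    have "cgr (int p) ((i + (-1)) ^ p) (i + (-1))" by (rule cgr_trans[OF A B])
    then show ?case by simp
  qed
qed

lemma const_pow: "[:a:] ^ n = [:a ^ n:]"
  by (induction n) (simp_all add: mult.commute)

lemma frob_poly:
  assumes "prime (p::nat)"
  shows "cgr (int p) ((g::int poly) ^ p) (pcompose g (monom 1 p))"
proof (induction g)
  case 0
  then show ?case using assms prime_gt_0_nat by (simp add: cgr_refl power_0_left)
next
  case (pCons a g)
  have e: "pCons a g = [:a:] + monom 1 1 * g"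
    by (simp add: monom_Suc monom_0 mult.commute)  
  have "cgr (int p) ((pCons a g) ^ p) ([:a:] ^ p + (monom 1 1 * g) ^ p)"
    unfolding e by (rule frob_add[OF assms])
  moreover have "cgr (int p) ([:a:] ^ p) [:a:]"
  proof -
    obtain z where "a ^ p = a + int p * z" using fermat_int[OF assms, of a] unfolding cgr_def by auto
    then show ?thesis unfolding cgr_def
      by (intro exI[of _ "[:z:]"]) (simp add: const_pow of_int_poly)
  qed
  moreover have "cgr (int p) ((monom 1 1 * g) ^ p) (monom 1 p * pcompose g (monom 1 p))"
  proof -
    have "(monom 1 1 * g) ^ p = monom 1 p * g ^ p" by (simp add: power_mult_distrib monom_power)
    then show ?thesis using cgr_mult[OF cgr_refl pCons.IH] by simp
  qed
  ultimately have "cgr (int p) ((pCons a g) ^ p) ([:a:] + monom 1 p * pcompose g (monom 1 p))"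
    by (meson cgr_add cgr_trans)
  then show ?case by (simp add: pcompose_pCons)
qed

definition minp :: "complex \<Rightarrow> int poly \<Rightarrow> bool" where
  "minp z f \<longleftrightarrow> f \<noteq> 0 \<and> poly (cp f) z = 0 \<and> (\<forall>h. poly (cp h) z = 0 \<longrightarrow> f dvd h)"

lemma poly_cp_mult: "poly (cp (p * q)) z = poly (cp p) z * poly (cp q) z"
  by (simp add: cp_mult)

lemma minp_exists:
  assumes "h0 \<noteq> 0" "poly (cp h0) z = 0"
  shows "\<exists>f. minp z f"
proof -
  let ?P = "\<lambda>m. m \<noteq> 0 \<and> poly (cp m) z = 0"
  obtain m0 where m0: "?P m0" and mmin: "\<And>y. ?P y \<Longrightarrow> degree m0 \<le> degree y"
    using ex_has_least_nat[of ?P h0 degree] assms by blast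
  define m where "m = primitive_part m0"
  have m0eq: "m0 = smult (content m0) m" unfolding m_def by simp
  have c0: "content m0 \<noteq> 0" using m0 by simp
  have "poly (cp m0) z = of_int (content m0) * poly (cp m) z"
    by (subst m0eq) (simp add: cp_smult)
  then have mz: "poly (cp m) z = 0" using m0 c0 by simp
  have m_ne: "m \<noteq> 0" using m0 unfolding m_def by simp
  have degm: "degree m = degree m0" unfolding m_def by simp
  have cm: "content m = 1" unfolding m_def using m0 by simp
  have "m dvd h" if hz: "poly (cp h) z = 0" for h
  proof -
    obtain q r where qr: "pseudo_divmod h m = (q, r)" by (cases "pseudo_divmod h m") auto
    define c where "c = coeff m (degree m) ^ (Suc (degree h) - degree m)"
    have eq: "smult c h = m * q + r" and rr: "r = 0 \<or> degree r < degree m"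
      using pseudo_divmod[OF m_ne qr] unfolding c_def by auto
    have c_ne: "c \<noteq> 0" unfolding c_def using m_ne by simp
    have "r = smult c h - m * q" using eq by simp
    then have rz: "poly (cp r) z = 0" using hz mz by (simp add: cp_diff cp_smult cp_mult)
    have "r = 0"
    proof (rule ccontr)
      assume "r \<noteq> 0"
      then have "degree m0 \<le> degree r" using mmin rz by blast
      then show False using rr degm \<open>r \<noteq> 0\<close> by simp
    qed
    then have "m dvd smult c h" using eq by simp
    then have "fract_poly m dvd fract_poly (smult c h)" by (rule fract_poly_dvd)
    then have "fract_poly m dvd smult (to_fract c) (fract_poly h)"
      by (simp only: fract_poly_smult)
    moreover have "to_fract c \<noteq> 0" using c_ne by simp
    ultimately have "fract_poly m dvd fract_poly h"
      by (rule dvd_smult_cancel)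
    then show ?thesis using cm by (rule fract_poly_dvdD)
  qed
  then show ?thesis using m_ne mz unfolding minp_def by blast
qed

lemma minp_root:
  assumes f: "minp z f" and w: "poly (cp f) w = 0"
  shows "minp w f"
proof -
  from f have f0: "f \<noteq> 0" and fz: "poly (cp f) z = 0" and fd: "\<And>h. poly (cp h) z = 0 \<Longrightarrow> f dvd h"
    unfolding minp_def by auto
  obtain m where m: "minp w m" using minp_exists[OF f0 w] by blast
  then have "m dvd f" using w unfolding minp_def by auto
  then obtain q where q: "f = m * q" by (elim dvdE)
  have "poly (cp m) z * poly (cp q) z = 0" using fz q by (simp add: cp_mult)
  then have "poly (cp m) z = 0 \<or> poly (cp q) z = 0" by simp
  then show ?thesis
  proof
    assume "poly (cp m) z = 0"
    then have "f dvd m" using fd by blast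
    then show ?thesis using m f0 w unfolding minp_def using dvd_trans by blast
  next
    assume "poly (cp q) z = 0"
    then have "f dvd q" using fd by blast
    then obtain v where v: "q = f * v" by (elim dvdE)
    have "f * (m * v) = f * 1" using q v by (simp add: algebra_simps)
    then have "m * v = 1" using f0 by simp
    then have "poly (cp m) w * poly (cp v) w = 1" by (metis cp_mult cp_one poly_1 poly_mult)
    then show ?thesis using m unfolding minp_def by simp
  qed
qed

lemma minp_uminus: "minp z f \<Longrightarrow> minp z (- f)"
  unfolding minp_def by (auto simp: cp_uminus)

lemma P_deriv_identity:
  assumes "u \<ge> 1"
  shows "monom 1 1 * pderiv (monom 1 u - 1 :: int poly) - [:int u:] * (monom 1 u - 1) = [:int u:]"
proof -
  have "pderiv (monom 1 u - 1 :: int poly) = monom (int u) (u - 1)"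
    by (simp add: pderiv_diff pderiv_monom)
  moreover have "monom 1 1 * monom (int u) (u - 1) = monom (int u) u"
    using assms by (simp add: mult_monom)
  moreover have "[:int u:] * (monom 1 u - 1) = monom (int u) u - [:int u:]"
    by (simp add: algebra_simps smult_monom)
  ultimately show ?thesis by simp
qed

lemma dedekind_monic:
  assumes f: "minp z f" and zu: "z ^ u = 1" and u: "u \<ge> 1" and p: "prime p" and pu: "\<not> p dvd u"
    and Pfg: "monom 1 u - 1 = f * g" and lc: "lead_coeff f = 1"
  shows "poly (cp f) (z ^ p) = 0"
proof (rule ccontr)
  assume nz: "poly (cp f) (z ^ p) \<noteq> 0"
  from f have f0: "f \<noteq> 0" and fz: "poly (cp f) z = 0" and fd: "\<And>h. poly (cp h) z = 0 \<Longrightarrow> f dvd h"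
    unfolding minp_def by auto
  have degf: "degree f \<ge> 1"
  proof (rule ccontr)
    assume "\<not> 1 \<le> degree f"
    then have "degree f = 0" by simp
    then obtain c where "f = [:c:]" by (metis degree_eq_zeroE)
    then show False using fz f0 by (simp add: cp_const)
  qed
  define P :: "int poly" where "P = monom 1 u - 1"
  have "poly (cp P) (z ^ p) = (z ^ u) ^ p - 1"
    unfolding P_def by (simp add: cp_diff cp_monom poly_monom power_mult[symmetric] mult.commute)
  then have "poly (cp P) (z ^ p) = 0" using zu by simp
  then have gz: "poly (cp g) (z ^ p) = 0" using nz Pfg unfolding P_def by (simp add: cp_mult)
  define G where "G = pcompose g (monom 1 p)"
  have "poly (cp G) z = 0" unfolding G_def using gz by (simp add: cp_pcompose poly_pcompose cp_monom poly_monom)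
  then obtain A where A: "G = f * A" using fd by (blast elim: dvdE)
  obtain H where H: "g ^ p = G + of_int (int p) * H" using frob_poly[OF p, of g] unfolding cgr_def G_def by blast
  define B where "B = monom 1 1 * pderiv g - [:int u:] * g"
  define X where "X = monom 1 1 * pderiv f * g"
  have uid: "[:int u:] = X + f * B"
    using P_deriv_identity[OF u] unfolding Pfg X_def B_def
    by (simp add: pderiv_mult algebra_simps)
  have "X + f * B - X dvd (X + f * B) ^ p - X ^ p"
    by (simp add: power_diff_sumr2)
  then obtain C where C: "(X + f * B) ^ p = X ^ p + f * C"
    by (auto elim!: dvdE simp: algebra_simps) (metis add_diff_cancel_left' diff_diff_eq2 diff_zero)
  define Y where "Y = (monom 1 1 * pderiv f) ^ p"
  have "X ^ p = Y * g ^ p" unfolding X_def Y_def by (simp add: power_mult_distrib)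
  also have "\<dots> = f * (Y * A) + of_int (int p) * (Y * H)" using H A by (simp add: algebra_simps)
  finally have up: "[:int u:] ^ p = f * (Y * A + C) + of_int (int p) * (Y * H)"
    using C uid by (simp add: algebra_simps)
  obtain Q R where QR: "pseudo_divmod (Y * H) f = (Q, R)" by (cases "pseudo_divmod (Y * H) f") auto
  have E: "Y * H = f * Q + R" and RR: "R = 0 \<or> degree R < degree f"
    using pseudo_divmod[OF f0 QR] lc by auto
  define W where "W = Y * A + C + of_int (int p) * Q"
  have key: "[:int u ^ p:] - smult (int p) R = f * W"
    using up E unfolding W_def by (simp add: const_pow of_int_poly algebra_simps smult_add_right)
  have "degree ([:int u ^ p:] - smult (int p) R) < degree f"
  proof -
    have "degree ([:int u ^ p:] - smult (int p) R) \<le> max (degree [:int u ^ p:]) (degree (smult (int p) R))"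
      by (rule degree_diff_le_max)
    also have "\<dots> \<le> max 0 (degree R)" by simp
    finally show ?thesis using RR degf by auto
  qed
  then have "W = 0" using key f0 degree_mult_eq[of f W] by (cases "W = 0") auto
  then have "coeff ([:int u ^ p:] - smult (int p) R) 0 = 0" using key by simp
  then have "int u ^ p = int p * coeff R 0" by simp
  then have "int p dvd int u ^ p" by simp
  then have "int p dvd int u" using p prime_dvd_power by (metis prime_nat_int_transfer)
  then show False using pu by simp
qed

lemma dedekind:
  assumes f: "minp z f" and zu: "z ^ u = 1" and u: "u \<ge> 1" and p: "prime p" and pu: "\<not> p dvd u"
  shows "poly (cp f) (z ^ p) = 0"
proof -
  have "poly (cp (monom 1 u - 1)) z = 0" using zu by (simp add: cp_diff cp_monom poly_monom)
  then obtain g where Pfg: "monom 1 u - 1 = f * g" using f unfolding minp_def by (blast elim: dvdE)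
  have "lead_coeff (monom 1 u - 1 :: int poly) = 1"
  proof -
    have "(monom 1 u - 1 :: int poly) = - 1 + monom 1 u" by simp
    also have "lead_coeff \<dots> = 1" using u by (subst lead_coeff_add_le) (auto simp: degree_monom_eq)
    finally show ?thesis .
  qed
  then have "lead_coeff f * lead_coeff g = 1" using Pfg by (simp add: lead_coeff_mult)
  then have "lead_coeff f = 1 \<or> lead_coeff f = -1" using pos_zmult_eq_1_iff_lemma by blast
  then show ?thesis
  proof
    assume "lead_coeff f = 1"
    then show ?thesis using dedekind_monic[OF f zu u p pu Pfg] by blast
  next
    assume "lead_coeff f = -1"
    then have "lead_coeff (- f) = 1" by simp
    moreover have "monom 1 u - 1 = (- f) * (- g)" using Pfg by simp
    ultimately have "poly (cp (- f)) (z ^ p) = 0" using dedekind_monic[OF minp_uminus[OF f] zu u p pu] by blast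
    then show ?thesis by (simp add: cp_uminus)
  qed
qed

definition eta :: "nat \<Rightarrow> complex" where "eta u = cis (2 * pi / real u)"

lemma eta_pow: "eta u ^ k = cis (2 * pi * real k / real u)"
  unfolding eta_def DeMoivre by (simp add: mult_ac)

lemma eta_pow_u: "u \<ge> 1 \<Longrightarrow> eta u ^ u = 1"
  by (simp add: eta_pow)

lemma eta_pow_mod: "u \<ge> 1 \<Longrightarrow> eta u ^ a = eta u ^ (a mod u)"
proof -
  assume u: "u \<ge> 1"
  have "a = a mod u + u * (a div u)" by simp
  then have "eta u ^ a = eta u ^ (a mod u) * (eta u ^ u) ^ (a div u)"
    by (metis power_add power_mult)
  then show ?thesis using eta_pow_u[OF u] by simp
qed

lemma eta_inj: "u \<ge> 1 \<Longrightarrow> inj_on (\<lambda>k. eta u ^ k) {..<u}"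
proof -
  assume u: "u \<ge> 1"
  have "inj_on (\<lambda>k. cis (2 * pi * real k / real u)) {..<u}"
    using bij_betw_roots_unity[of u] u bij_betw_imp_inj_on by auto
  then show ?thesis by (simp add: eta_pow)
qed

lemma eta_pow_eq: "u \<ge> 1 \<Longrightarrow> eta u ^ a = eta u ^ b \<longleftrightarrow> a mod u = b mod u"
proof -
  assume u: "u \<ge> 1"
  have "eta u ^ a = eta u ^ b \<longleftrightarrow> eta u ^ (a mod u) = eta u ^ (b mod u)"
    using eta_pow_mod[OF u] by metis
  also have "\<dots> \<longleftrightarrow> a mod u = b mod u"
    using eta_inj[OF u] u unfolding inj_on_def by auto
  finally show ?thesis .
qed

lemma eta_pow_eq_1: "u \<ge> 1 \<Longrightarrow> eta u ^ a = 1 \<longleftrightarrow> u dvd a"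
  using eta_pow_eq[of u a 0] by (simp add: mod_eq_0_iff_dvd)

lemma roots_unity_eta: "u \<ge> 1 \<Longrightarrow> w ^ u = 1 \<Longrightarrow> \<exists>k<u. w = eta u ^ k"
proof -
  assume u: "u \<ge> 1" and w: "w ^ u = 1"
  have "(\<lambda>k. cis (2 * pi * real k / real u)) ` {..<u} = {z. z ^ u = 1}"
    using bij_betw_roots_unity[of u] u by (auto simp: bij_betw_def)
  then show ?thesis using w by (force simp: eta_pow)
qed

lemma prod_linear_dvd:
  fixes p :: "complex poly"
  assumes "finite S" "inj_on a S" "\<And>x. x \<in> S \<Longrightarrow> poly p (a x) = 0"
  shows "(\<Prod>x\<in>S. [:- a x, 1:]) dvd p"
  using assms
proof (induction S arbitrary: p rule: finite_induct)
  case empty then show ?case by simp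
next
  case (insert x S)
  then have "(\<Prod>x\<in>S. [:- a x, 1:]) dvd p" by (auto simp: inj_on_def)
  then obtain q where q: "p = (\<Prod>x\<in>S. [:- a x, 1:]) * q" by (elim dvdE)
  have "poly (\<Prod>y\<in>S. [:- a y, 1:]) (a x) \<noteq> 0"
    using insert.hyps insert.prems(1) by (auto simp: poly_prod inj_on_def)
  moreover have "poly p (a x) = 0" using insert.prems by simp
  ultimately have "poly q (a x) = 0" using q by simp
  then have dq: "[:- a x, 1:] dvd q" by (simp add: poly_eq_0_iff_dvd)
  have eqp: "(\<Prod>y\<in>insert x S. [:- a y, 1:]) = [:- a x, 1:] * (\<Prod>y\<in>S. [:- a y, 1:])"
    by (rule prod.insert[OF insert.hyps(1,2)])
  have "(\<Prod>y\<in>S. [:- a y, 1:]) * [:- a x, 1:] dvd (\<Prod>y\<in>S. [:- a y, 1:]) * q"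
    by (rule mult_dvd_mono[OF dvd_refl dq])
  then show ?case unfolding eqp q by (simp only: mult.commute[of "[:- a x, 1:]"])
qed

lemma degree_prod_linear:
  fixes a :: "'b \<Rightarrow> complex"
  assumes "finite S"
  shows "degree (\<Prod>x\<in>S. [:- a x, 1:]) = card S" and "lead_coeff (\<Prod>x\<in>S. [:- a x, 1:]) = 1"
proof -
  show "degree (\<Prod>x\<in>S. [:- a x, 1:]) = card S"
    by (subst degree_prod_sum_eq) auto
  show "lead_coeff (\<Prod>x\<in>S. [:- a x, 1:]) = 1"
    by (simp add: lead_coeff_prod)
qed

lemma minp_eta_roots:
  assumes u: "u \<ge> 1" and f: "minp (eta u) f"
  shows "\<And>k. coprime k u \<Longrightarrow> poly (cp f) (eta u ^ k) = 0"
proof -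
  have main: "poly (cp f) (eta u ^ k) = 0" if "k \<ge> 1" "coprime k u" for k
    using that
  proof (induction k rule: less_induct)
    case (less k)
    show ?case
    proof (cases "k = 1")
      case True then show ?thesis using f unfolding minp_def by simp
    next
      case False
      then obtain p where p: "prime p" "p dvd k" using prime_factor_nat by blast
      then obtain k' where k': "k = p * k'" by (elim dvdE)
      have "k' \<ge> 1" using less.prems k' by (cases k') auto
      moreover have "k' < k" using k' p(1) \<open>k' \<ge> 1\<close> prime_gt_1_nat by auto
      moreover have "coprime k' u" using less.prems k' by simp
      ultimately have IH: "poly (cp f) (eta u ^ k') = 0" using less.IH by blast
      have "minp (eta u ^ k') f" using minp_root[OF f IH] .
      moreover have "(eta u ^ k') ^ u = 1" using eta_pow_u[OF u] by (metis power_mult mult.commute power_one)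
      moreover have "\<not> p dvd u" using p less.prems(2) coprime_common_divisor not_prime_unit by blast
      ultimately have "poly (cp f) ((eta u ^ k') ^ p) = 0" using dedekind u p(1) by blast
      then show ?thesis using k' by (simp add: power_mult mult.commute)
    qed
  qed
  fix k assume k: "coprime k u"
  show "poly (cp f) (eta u ^ k) = 0"
  proof (cases "k = 0")
    case True
    then have "u = 1" using k by simp
    then show ?thesis using True main[of 1] by (simp add: eta_def)
  next
    case False then show ?thesis using main k by simp
  qed
qed

lemma minp_eta_roots_only:
  assumes u: "u \<ge> 1" and f: "minp (eta u) f" and w: "poly (cp f) w = 0"
  shows "\<exists>k\<in>{1..u}. coprime k u \<and> w = eta u ^ k"
proof -
  have "poly (cp (monom 1 u - 1)) (eta u) = 0" using eta_pow_u[OF u] by (simp add: cp_diff cp_monom poly_monom)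
  then have "f dvd monom 1 u - 1" using f unfolding minp_def by blast
  then have "poly (cp (monom 1 u - 1)) w = 0" using w by (auto elim!: dvdE simp: cp_mult)
  then have "w ^ u = 1" by (simp add: cp_diff cp_monom poly_monom)
  then obtain k where k: "k < u" "w = eta u ^ k" using roots_unity_eta[OF u] by blast
  define k1 where "k1 = (if k = 0 then u else k)"
  have k1: "k1 \<in> {1..u}" "w = eta u ^ k1" using k u eta_pow_u[OF u] unfolding k1_def by auto
  have "coprime k1 u"
  proof (rule ccontr)
    assume nc: "\<not> coprime k1 u"
    define d where "d = gcd k1 u"
    have d1: "d > 1" using nc unfolding d_def
      by (metis One_nat_def coprime_iff_gcd_eq_1 gcd_pos_nat k1(1) atLeastAtMost_iff less_one nat_neq_iff not_one_le_zero)
    define e where "e = u div d"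
    have ude: "u = d * e" unfolding e_def d_def by simp
    have "e \<noteq> 0" using ude u by auto
    then have e1: "e \<ge> 1" "e < u" using ude d1 mult_less_mono1[of 1 d e] by auto
    have "d dvd k1" unfolding d_def by simp
    then obtain k2 where k2: "k1 = d * k2" by (elim dvdE)
    have "w ^ e = eta u ^ (k2 * u)" using k1(2) k2 ude by (simp add: power_mult[symmetric] mult_ac)
    also have "\<dots> = 1" by (metis eta_pow_u[OF u] power_mult mult.commute power_one)
    finally have we: "w ^ e = 1" .
    have "minp w f" using minp_root[OF f w] .
    moreover have "poly (cp (monom 1 e - 1)) w = 0" using we by (simp add: cp_diff cp_monom poly_monom)
    ultimately have "f dvd monom 1 e - 1" unfolding minp_def by blast
    then have "poly (cp (monom 1 e - 1)) (eta u) = 0" using f unfolding minp_def by (auto elim!: dvdE simp: cp_mult)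
    then have "eta u ^ e = 1" by (simp add: cp_diff cp_monom poly_monom)
    then have "u dvd e" using eta_pow_eq_1[OF u] by (metis power_one_right)
    then show False using e1 by (simp add: nat_dvd_not_less)
  qed
  then show ?thesis using k1 by blast
qed

lemma P_root_eta: "u \<ge> 1 \<Longrightarrow> poly (cp (monom 1 u - 1)) (eta u ^ k) = 0"
proof -
  assume u: "u \<ge> 1"
  have "(eta u ^ k) ^ u = 1" using eta_pow_u[OF u] by (metis power_mult mult.commute power_one)
  then show ?thesis by (simp add: cp_diff cp_monom poly_monom)
qed

lemma cyclo:
  assumes u: "u \<ge> 1"
  shows "cp (cyclotomic u) = cyclotomic_complex u \<and> minp (eta u) (cyclotomic u)"
proof -
  define P :: "int poly" where "P = monom 1 u - 1"
  have lcP: "lead_coeff P = 1"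
  proof -
    have "P = - 1 + monom 1 u" unfolding P_def by simp
    also have "lead_coeff \<dots> = 1" using u by (subst lead_coeff_add_le) (auto simp: degree_monom_eq)
    finally show ?thesis .
  qed
  have P0: "P \<noteq> 0" using lcP by auto
  have degP: "degree P = u"
  proof -
    have "P = - 1 + monom 1 u" unfolding P_def by simp
    also have "degree \<dots> = u" using u by (subst degree_add_eq_right) (auto simp: degree_monom_eq)
    finally show ?thesis .
  qed
  have Pe: "poly (cp P) (eta u) = 0" using P_root_eta[OF u, of 1] unfolding P_def by simp
  obtain f0 where f0: "minp (eta u) f0" using minp_exists[OF P0 Pe] by blast
  then obtain g0 where Pfg0: "P = f0 * g0" using Pe unfolding minp_def by (blast elim: dvdE)
  have "lead_coeff f0 * lead_coeff g0 = 1" using Pfg0 lcP by (simp add: lead_coeff_mult)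
  then have "lead_coeff f0 = 1 \<or> lead_coeff f0 = -1" using pos_zmult_eq_1_iff_lemma by blast
  then obtain f g where f: "minp (eta u) f" and lcf: "lead_coeff f = 1" and Pfg: "P = f * g"
  proof
    assume "lead_coeff f0 = 1" then show ?thesis using that f0 Pfg0 by blast
  next
    assume "lead_coeff f0 = -1"
    then have "lead_coeff (- f0) = 1" by simp
    moreover have "P = (- f0) * (- g0)" using Pfg0 by simp
    ultimately show ?thesis using that minp_uminus[OF f0] by blast
  qed
  have f_ne: "f \<noteq> 0" and g_ne: "g \<noteq> 0" using Pfg P0 by auto
  define a where "a = (\<lambda>k. eta u ^ k)"
  define K where "K = {k\<in>{1..u}. coprime k u}"
  define N where "N = {k\<in>{1..u}. \<not> coprime k u}"
  have inj: "inj_on a {1..u}"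
  proof (rule inj_onI)
    fix x y assume xy: "x \<in> {1..u}" "y \<in> {1..u}" "a x = a y"
    then have "x mod u = y mod u" unfolding a_def using eta_pow_eq[OF u] by blast
    moreover have "z mod u = (if z = u then 0 else z)" if "z \<in> {1..u}" for z
      using that by auto
    ultimately show "x = y" using xy(1,2) by (auto split: if_splits)
  qed
  have finK: "finite K" and finN: "finite N" unfolding K_def N_def by auto
  have KN: "K \<subseteq> {1..u}" "N \<subseteq> {1..u}" unfolding K_def N_def by auto
  have injK: "inj_on a K" by (rule inj_on_subset[OF inj KN(1)])
  have injN: "inj_on a N" by (rule inj_on_subset[OF inj KN(2)])
  have rootsK: "poly (cp f) (a k) = 0" if "k \<in> K" for k
    using minp_eta_roots[OF u f] that unfolding K_def a_def by blast
  have rootsN: "poly (cp g) (a k) = 0" if k: "k \<in> N" for k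
  proof -
    have "poly (cp f) (a k) \<noteq> 0"
    proof
      assume "poly (cp f) (a k) = 0"
      then obtain j where j: "j \<in> {1..u}" "coprime j u" "a k = a j"
        using minp_eta_roots_only[OF u f] unfolding a_def by blast
      moreover have "k \<in> {1..u}" using k KN by blast
      ultimately have "k = j" using inj_onD[OF inj] by blast
      then show False using j k unfolding N_def by blast
    qed
    moreover have "poly (cp P) (a k) = 0" unfolding P_def a_def using P_root_eta[OF u] .
    ultimately show ?thesis using Pfg by (simp add: cp_mult)
  qed
  have dK: "(\<Prod>k\<in>K. [:- a k, 1:]) dvd cp f" using prod_linear_dvd[OF finK injK rootsK] .
  have dN: "(\<Prod>k\<in>N. [:- a k, 1:]) dvd cp g" using prod_linear_dvd[OF finN injN rootsN] .
  have cK: "card K \<le> degree f"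
    using dvd_imp_degree_le[OF dK] f_ne degree_prod_linear(1)[OF finK, of a] by (simp add: cp_eq_0 degree_cp)
  have cN: "card N \<le> degree g"
    using dvd_imp_degree_le[OF dN] g_ne degree_prod_linear(1)[OF finN, of a] by (simp add: cp_eq_0 degree_cp)
  have "K \<union> N = {1..u}" "K \<inter> N = {}" unfolding K_def N_def by auto
  then have "card K + card N = card {1..u}"
    using card_Un_disjoint[OF finK finN] by simp
  then have "card K + card N = u" by simp
  moreover have "degree f + degree g = u" using degP Pfg f_ne g_ne by (simp add: degree_mult_eq)
  ultimately have degf: "degree f = card K" using cK cN by linarith
  obtain q where q: "cp f = (\<Prod>k\<in>K. [:- a k, 1:]) * q" using dK by (elim dvdE)
  have q0: "q \<noteq> 0" using q f_ne by (auto simp: cp_eq_0)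
  have pr0: "(\<Prod>k\<in>K. [:- a k, 1:]) \<noteq> 0" using degree_prod_linear(2)[OF finK, of a] by auto
  have "degree (cp f) = degree (\<Prod>k\<in>K. [:- a k, 1:]) + degree q"
    unfolding q by (rule degree_mult_eq[OF pr0 q0])
  then have "degree (cp f) = card K + degree q" using degree_prod_linear(1)[OF finK, of a] by simp
  then have "degree q = 0" using degf by (simp add: degree_cp)
  moreover have "lead_coeff q = 1"
    using arg_cong[OF q, of lead_coeff] lcf degree_prod_linear(2)[OF finK, of a]
    by (simp add: lead_coeff_mult lead_coeff_cp)
  ultimately have "q = 1"
  proof -
    assume d0: "degree q = 0" and l1: "lead_coeff q = 1"
    obtain c where qc: "q = [:c:]" using degree_eq_zeroE[OF d0] by blast
    then have "c = 1" using l1 by simp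
    then show "q = 1" using qc by (simp add: one_pCons)
  qed
  then have cpf: "cp f = (\<Prod>k\<in>K. [:- a k, 1:])" using q by simp
  also have "\<dots> = cyclotomic_complex u" unfolding cyclotomic_complex_def K_def a_def
    by (simp add: eta_pow)
  finally have cpf2: "cp f = cyclotomic_complex u" .
  have "cyclotomic u = f" unfolding cyclotomic_def
    using cpf2 cp_inj by (intro the_equality) auto
  then show ?thesis using cpf2 f by simp
qed

lemma pcompose_monom_monom: "pcompose (monom a j) (monom 1 u) = (monom a (j * u) :: 'a::comm_ring_1 poly)"
proof (induction j)
  case 0 then show ?case by (simp add: monom_0)
next
  case (Suc j)
  have "pcompose (monom a (Suc j)) (monom 1 u) = monom 1 u * pcompose (monom a j) (monom 1 u)"
    by (simp add: monom_Suc pcompose_pCons)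
  also have "\<dots> = monom a (Suc j * u)" using Suc by (simp add: mult_monom add.commute)
  finally show ?case .
qed

definition cdec :: "int poly \<Rightarrow> nat \<Rightarrow> nat \<Rightarrow> int poly" where
  "cdec r u i = (\<Sum>j\<le>degree r. monom (coeff r (i + j * u)) j)"

lemma decomp:
  assumes u: "u \<ge> 1"
  shows "r = (\<Sum>i<u. monom 1 i * pcompose (cdec r u i) (monom 1 u))"
proof (rule poly_eqI)
  fix n
  define D where "D = degree r"
  have "(\<Sum>i<u. monom 1 i * pcompose (cdec r u i) (monom 1 u))
      = (\<Sum>i<u. \<Sum>j\<le>D. monom (coeff r (i + j * u)) (i + j * u))"
    unfolding cdec_def D_def
    by (simp add: pcompose_sum sum_distrib_left pcompose_monom_monom mult_monom)
  then have "coeff (\<Sum>i<u. monom 1 i * pcompose (cdec r u i) (monom 1 u)) n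
      = (\<Sum>i<u. \<Sum>j\<le>D. if i + j * u = n then coeff r n else 0)"
    by (simp add: coeff_sum coeff_monom eq_commute[of n] cong: if_cong)
  also have "\<dots> = (\<Sum>i<u. \<Sum>j\<le>D. if i = n mod u \<and> j = n div u then coeff r n else 0)"
  proof (intro sum.cong refl)
    fix i j assume "i \<in> {..<u}"
    then have "i < u" by simp
    then have "(i + j * u = n) \<longleftrightarrow> (i = n mod u \<and> j = n div u)"
      using u by (auto simp: mult.commute)
    then show "(if i + j * u = n then coeff r n else 0) = (if i = n mod u \<and> j = n div u then coeff r n else 0)"
      by simp
  qed
  also have "\<dots> = (if n div u \<le> D then coeff r n else 0)"
  proof -
    have "(\<Sum>j\<le>D. if i = n mod u \<and> j = n div u then coeff r n else 0)
        = (if i = n mod u then (if n div u \<le> D then coeff r n else 0) else 0)" for i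
      by (cases "i = n mod u") (simp_all add: sum.delta)
    then have "(\<Sum>i<u. \<Sum>j\<le>D. if i = n mod u \<and> j = n div u then coeff r n else 0)
        = (\<Sum>i<u. if i = n mod u then (if n div u \<le> D then coeff r n else 0) else 0)" by simp
    also have "\<dots> = (if n div u \<le> D then coeff r n else 0)" using u by (simp add: sum.delta)
    finally show ?thesis .
  qed
  also have "\<dots> = coeff r n"
  proof -
    have "n div u \<le> n" by simp
    show ?thesis
    proof (cases "n div u \<le> D")
      case False
      then have "degree r < n" using \<open>n div u \<le> n\<close> unfolding D_def by linarith
      then show ?thesis using False by (simp add: coeff_eq_0)
    qed simp
  qed
  finally show "coeff r n = coeff (\<Sum>i<u. monom 1 i * pcompose (cdec r u i) (monom 1 u)) n" by simp
qed

lemma eval_decomp: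
  assumes u: "u \<ge> 1"
  shows "poly (cp r) z = (\<Sum>i<u. z ^ i * poly (cp (cdec r u i)) (z ^ u))"
proof -
  have "poly (cp r) z = poly (cp (\<Sum>i<u. monom 1 i * pcompose (cdec r u i) (monom 1 u))) z"
    using decomp[OF u, of r] by (rule arg_cong)
  also have "\<dots> = (\<Sum>i<u. z ^ i * poly (cp (cdec r u i)) (z ^ u))"
    by (simp add: cp_sum cp_mult cp_pcompose cp_monom poly_sum poly_pcompose poly_monom)
  finally show ?thesis .
qed

lemma dvd_root: "p dvd r \<Longrightarrow> poly (cp p) z = 0 \<Longrightarrow> poly (cp r) z = 0"
  by (auto elim!: dvdE simp: cp_mult)

lemma pow_mod_period: "(x::complex) ^ d = 1 \<Longrightarrow> x ^ k = x ^ (k mod d)"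
proof -
  assume x: "x ^ d = 1"
  have "k = k mod d + d * (k div d)" by simp
  then have "x ^ k = x ^ (k mod d) * (x ^ d) ^ (k div d)" by (metis power_add power_mult)
  then show ?thesis using x by simp
qed

lemma noncop:
  assumes u: "u \<ge> 1" and nc: "\<not> coprime k u"
  shows "\<exists>e. 1 \<le> e \<and> e < u \<and> (eta u ^ k) ^ e = 1"
proof -
  define d where "d = gcd k u"
  have "d \<noteq> 0" using u unfolding d_def by simp
  moreover have "d \<noteq> 1" using nc unfolding d_def by (simp add: coprime_iff_gcd_eq_1)
  ultimately have d1: "d > 1" by simp
  define e where "e = u div d"
  have ude: "u = d * e" unfolding e_def d_def by simp
  have "e \<noteq> 0" using ude u by auto
  then have e1: "e \<ge> 1" "e < u" using ude d1 mult_less_mono1[of 1 d e] by auto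
  have "d dvd k" unfolding d_def by simp
  then obtain k2 where k2: "k = d * k2" by (elim dvdE)
  have "(eta u ^ k) ^ e = eta u ^ (k2 * u)" using k2 ude by (simp add: power_mult[symmetric] mult_ac)
  also have "\<dots> = 1" by (metis eta_pow_u[OF u] power_mult mult.commute power_one)
  finally show ?thesis using e1 by blast
qed

lemma dir2:
  fixes r s :: "int poly"
  assumes r0: "poly r 0 \<noteq> 0" and u: "u \<ge> 1" and s: "degree s > 0"
    and cd: "cyclotomic u dvd r" and sd: "pcompose s (monom 1 u) dvd r"
  shows "\<not> arith_free {z::complex. z \<noteq> 0 \<and> poly (map_poly of_int r) z = 0}"
proof -
  let ?X = "{z::complex. z \<noteq> 0 \<and> poly (map_poly of_int r) z = 0}"
  have "minp (eta u) (cyclotomic u)" using cyclo[OF u] by blast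
  then have "poly (cp (cyclotomic u)) (eta u) = 0" unfolding minp_def by blast
  then have "poly (cp r) (eta u) = 0" using dvd_root[OF cd] by blast
  moreover have eta0: "eta u \<noteq> 0" unfolding eta_def by simp
  ultimately have etaX: "eta u \<in> ?X" by simp
  have "\<not> constant (poly (cp s))" using s by (simp add: constant_degree degree_cp)
  then obtain \<beta> where \<beta>: "poly (cp s) \<beta> = 0" using fundamental_theorem_of_algebra by blast
  have r00: "poly (cp r) 0 \<noteq> 0" using r0 by (simp add: poly_0_coeff_0 coeff_map_poly)
  have \<beta>0: "\<beta> \<noteq> 0"
  proof
    assume "\<beta> = 0"
    then have "poly (cp (pcompose s (monom 1 u))) 0 = 0" using \<beta> u
      by (simp add: cp_pcompose cp_monom poly_pcompose poly_monom power_0_left)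
    then show False using dvd_root[OF sd] r00 by blast
  qed
  have "card {z::complex. z ^ u = \<beta>} = u" using card_nth_roots[OF \<beta>0] u by simp
  then have "{z::complex. z ^ u = \<beta>} \<noteq> {}" using u by (metis card.empty not_one_le_zero)
  then obtain l where l: "l ^ u = \<beta>" by blast
  have l0: "l \<noteq> 0" using l \<beta>0 u by (auto simp: power_0_left)
  have lX: "l * eta u ^ k \<in> ?X" for k
  proof -
    have "(l * eta u ^ k) ^ u = \<beta>" using l eta_pow_u[OF u]
      by (simp add: power_mult_distrib) (metis power_mult mult.commute power_one)
    then have "poly (cp (pcompose s (monom 1 u))) (l * eta u ^ k) = 0" using \<beta>
      by (simp add: cp_pcompose cp_monom poly_pcompose poly_monom)
    then have "poly (cp r) (l * eta u ^ k) = 0" using dvd_root[OF sd] by blast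
    moreover have "l * eta u ^ k \<noteq> 0" using l0 eta0 by simp
    ultimately show ?thesis by simp
  qed
  have "\<exists>l\<in>?X. \<exists>m\<in>?X. \<forall>k\<le>card ?X. l * m ^ k \<in> ?X"
    using lX[of 0] lX etaX by (intro bexI[of _ l] bexI[of _ "eta u"]) auto
  then show ?thesis unfolding arith_free_def by blast
qed

lemma dir1:
  fixes r :: "int poly"
  assumes r0: "poly r 0 \<noteq> 0"
    and naf: "\<not> arith_free {z::complex. z \<noteq> 0 \<and> poly (map_poly of_int r) z = 0}"
  shows "\<exists>u::nat. u \<ge> 1 \<and> (\<exists>s::int poly. degree s > 0 \<and>
            cyclotomic u dvd r \<and> pcompose s (monom 1 u) dvd r)"
proof -
  define X where "X = {z::complex. z \<noteq> 0 \<and> poly (map_poly of_int r) z = 0}"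
  have rne: "r \<noteq> 0" using r0 by auto
  then have "cp r \<noteq> 0" by (simp add: cp_eq_0)
  then have "finite {z. poly (cp r) z = 0}" by (rule poly_roots_finite)
  then have finX: "finite X" unfolding X_def by (rule rev_finite_subset) auto
  then obtain l m where lX: "l \<in> X" and mX: "m \<in> X" and lm: "\<forall>k\<le>card X. l * m ^ k \<in> X"
    using naf unfolding arith_free_def X_def by blast
  have l0: "l \<noteq> 0" and m0: "m \<noteq> 0" using lX mX unfolding X_def by auto
  have "\<not> inj_on (\<lambda>k. l * m ^ k) {..card X}"
  proof
    assume inj: "inj_on (\<lambda>k. l * m ^ k) {..card X}"
    have "(\<lambda>k. l * m ^ k) ` {..card X} \<subseteq> X" using lm by auto
    then have "card {..card X} \<le> card X" using card_inj_on_le[OF inj _ finX] by blast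
    then show False by simp
  qed
  then obtain i j where ij: "i \<le> card X" "j \<le> card X" "i \<noteq> j" "l * m ^ i = l * m ^ j"
    unfolding inj_on_def by auto
  obtain a b where ab: "a < b" "b \<le> card X" "m ^ a = m ^ b"
  proof (cases "i < j")
    case True then show ?thesis using that[of i j] ij l0 by auto
  next
    case False then show ?thesis using that[of j i] ij l0 by auto
  qed
  define d where "d = b - a"
  have "m ^ b = m ^ a * m ^ d" unfolding d_def using ab(1) by (simp add: power_add[symmetric])
  then have md: "m ^ d = 1" using ab(3) m0 by simp
  have d1: "d \<ge> 1" "d \<le> card X" unfolding d_def using ab by auto
  have allk: "l * m ^ k \<in> X" for k
  proof -
    have "k mod d < d" using d1 by simp
    then have "k mod d \<le> card X" using d1 by linarith
    then have "l * m ^ (k mod d) \<in> X" using lm by blast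
    then show ?thesis using pow_mod_period[OF md, of k] by simp
  qed
  define u where "u = (LEAST n. 0 < n \<and> m ^ n = 1)"
  have uP: "0 < u \<and> m ^ u = 1" unfolding u_def by (rule LeastI[of _ d]) (use d1 md in auto)
  then have u: "u \<ge> 1" and mu: "m ^ u = 1" by auto
  have umin: "m ^ n \<noteq> 1" if "0 < n" "n < u" for n
    using not_less_Least[of n "\<lambda>n. 0 < n \<and> m ^ n = 1"] that unfolding u_def by blast
  obtain k0 where k0: "k0 < u" "m = eta u ^ k0" using roots_unity_eta[OF u mu] by blast
  have cop: "coprime k0 u"
  proof (rule ccontr)
    assume "\<not> coprime k0 u"
    then obtain e where "1 \<le> e" "e < u" "(eta u ^ k0) ^ e = 1" using noncop[OF u] by blast
    then show False using umin k0 by auto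
  qed
  define f where "f = cyclotomic u"
  have fmin: "minp (eta u) f" using cyclo[OF u] unfolding f_def by blast
  have "poly (cp f) m = 0" using minp_eta_roots[OF u fmin cop] k0 by simp
  then have fm: "minp m f" by (rule minp_root[OF fmin])
  have "poly (cp r) m = 0" using mX unfolding X_def by simp
  then have cyc_dvd: "cyclotomic u dvd r" using fm unfolding minp_def f_def by blast
  have injm: "inj_on (\<lambda>j. m ^ j) {..<u}"
  proof (rule inj_onI)
    fix x y assume xy: "x \<in> {..<u}" "y \<in> {..<u}" "m ^ x = m ^ y"
    show "x = y"
    proof (rule ccontr)
      assume "x \<noteq> y"
      then obtain a b where "a < b" "b < u" "m ^ a = m ^ b"
        using xy by (metis lessThan_iff linorder_neqE_nat)
      then have "b = a + (b - a)" by simp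
      then have "m ^ b = m ^ a * m ^ (b - a)" by (metis power_add)
      then have "m ^ (b - a) = 1" using \<open>m ^ a = m ^ b\<close> m0 by simp
      then show False using umin[of "b - a"] \<open>a < b\<close> \<open>b < u\<close> by simp
    qed
  qed
  have sub: "(\<lambda>j. m ^ j) ` {..<u} \<subseteq> {z. z ^ u = 1}"
  proof
    fix z assume "z \<in> (\<lambda>j. m ^ j) ` {..<u}"
    then obtain j where "z = m ^ j" by blast
    moreover have "(m ^ j) ^ u = 1" by (metis mu power_mult mult.commute power_one)
    ultimately show "z \<in> {z. z ^ u = 1}" by simp
  qed
  have fin1: "finite {z::complex. z ^ u = 1}" using u by (intro finite_nth_roots) simp
  have "card ((\<lambda>j. m ^ j) ` {..<u}) = card {z::complex. z ^ u = 1}"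
    using card_image[OF injm] card_roots_unity_eq[of u] u by simp
  then have imeq: "(\<lambda>j. m ^ j) ` {..<u} = {z. z ^ u = 1}"
    by (rule card_subset_eq[OF fin1 sub])
  have rootsr: "poly (cp r) (l * w) = 0" if "w ^ u = 1" for w
  proof -
    have "w \<in> (\<lambda>j. m ^ j) ` {..<u}" using that by (subst imeq) simp
    then obtain j where "w = m ^ j" by (elim imageE) simp
    then show ?thesis using allk[of j] unfolding X_def by simp
  qed
  \<comment> \<open>the components vanish at l^u\<close>
  define \<beta> where "\<beta> = l ^ u"
  define c where "c = cdec r u"
  define Q :: "complex poly" where "Q = (\<Sum>i<u. monom (poly (cp (c i)) \<beta> * l ^ i) i)"
  have Qroot: "poly Q w = 0" if w: "w ^ u = 1" for w
  proof -
    have "poly Q w = (\<Sum>i<u. poly (cp (c i)) \<beta> * l ^ i * w ^ i)"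
      unfolding Q_def by (simp add: poly_sum poly_monom)
    also have "\<dots> = (\<Sum>i<u. (l * w) ^ i * poly (cp (c i)) ((l * w) ^ u))"
      using w unfolding \<beta>_def by (simp add: power_mult_distrib mult_ac)
    also have "\<dots> = poly (cp r) (l * w)" unfolding c_def by (rule eval_decomp[OF u, symmetric])
    also have "\<dots> = 0" using rootsr[OF w] .
    finally show ?thesis .
  qed
  have degQ: "degree Q < u"
  proof -
    have "degree Q \<le> u - 1" unfolding Q_def
      by (rule degree_sum_le) (auto intro: order.trans[OF degree_monom_le])
    then show ?thesis using u by simp
  qed
  have Q0: "Q = 0"
  proof (rule ccontr)
    assume "Q \<noteq> 0"
    then have "card {x. poly Q x = 0} \<le> degree Q" by (rule card_poly_roots_bound)
    moreover have "card {z::complex. z ^ u = 1} \<le> card {x. poly Q x = 0}"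
      using Qroot poly_roots_finite[OF \<open>Q \<noteq> 0\<close>] by (intro card_mono) auto
    ultimately show False using card_roots_unity_eq[of u] u degQ by simp
  qed
  have cz: "poly (cp (c i)) \<beta> = 0" if "i < u" for i
  proof -
    have "coeff Q i = poly (cp (c i)) \<beta> * l ^ i"
      unfolding Q_def using that by (simp add: coeff_sum coeff_monom sum.delta)
    then show ?thesis using Q0 l0 by simp
  qed
  have "\<exists>i<u. c i \<noteq> 0"
  proof (rule ccontr)
    assume "\<not> (\<exists>i<u. c i \<noteq> 0)"
    then have "r = 0" using decomp[OF u, of r] unfolding c_def by simp
    then show False using rne by simp
  qed
  then obtain i0 where "i0 < u" "c i0 \<noteq> 0" by blast
  then obtain s where s: "minp \<beta> s" using minp_exists cz by blast
  have degs: "degree s > 0"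
  proof (rule ccontr)
    assume "\<not> degree s > 0"
    then obtain a where "s = [:a:]" by (metis degree_eq_zeroE gr0I)
    then show False using s unfolding minp_def by (auto simp: cp_const)
  qed
  have "pcompose s (monom 1 u) dvd monom 1 i * pcompose (c i) (monom 1 u)" if "i < u" for i
  proof -
    have "s dvd c i" using s cz[OF that] unfolding minp_def by blast
    then obtain w where "c i = s * w" by (elim dvdE)
    then have "pcompose (c i) (monom 1 u) = pcompose s (monom 1 u) * pcompose w (monom 1 u)"
      by (simp add: pcompose_mult)
    then show ?thesis by simp
  qed
  then have "pcompose s (monom 1 u) dvd (\<Sum>i<u. monom 1 i * pcompose (c i) (monom 1 u))"
    by (intro dvd_sum) auto
  then have "pcompose s (monom 1 u) dvd r" using decomp[OF u, of r] unfolding c_def by simp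
  then show ?thesis using u degs cyc_dvd by blast
qed

theorem proposition3p12:
  fixes r :: "int poly"
  assumes "poly r 0 \<noteq> 0"
  defines "X \<equiv> {z::complex. z \<noteq> 0 \<and> poly (map_poly of_int r) z = 0}"
  shows "(\<not> arith_free X) \<longleftrightarrow>
         (\<exists>u::nat. u \<ge> 1 \<and> (\<exists>s::int poly. degree s > 0 \<and>
            cyclotomic u dvd r \<and> pcompose s (monom 1 u) dvd r))"
proof
  assume "\<not> arith_free X"
  then show "\<exists>u::nat. u \<ge> 1 \<and> (\<exists>s::int poly. degree s > 0 \<and>
            cyclotomic u dvd r \<and> pcompose s (monom 1 u) dvd r)"
    using dir1[OF assms(1)] unfolding X_def by blast
next
  assume "\<exists>u::nat. u \<ge> 1 \<and> (\<exists>s::int poly. degree s > 0 \<and>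
            cyclotomic u dvd r \<and> pcompose s (monom 1 u) dvd r)"
  then show "\<not> arith_free X" using dir2[OF assms(1)] unfolding X_def by blast
qed

end
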